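(* Let $P=\{p_1,\dots,p_n\}$ be weighted points in $\mathbb{R}^d$ with total weight $1$, let $S=\{s_1,\dots,s_m\}$ be $d$-dimensional simplices in $\mathbb{R}^d$ of total volume $1$ with longest edge length $\Delta$, and let $0<\delta\le\frac15$. Let $\tau$ be the transport plan produced by the construction in the context and $\tau^*$ an optimal transport plan between $P$ and $S$. Then $\|\tau\|\le(1+21\delta)\|\tau^*\|$.
   Context: Each simplex's mass equals its volume and is spread uniformly with a common density. A transport plan moves from each point its weight and delivers to the simplices exactly their mass distribution; its cost $\|\tau\|$ is the integral of moved mass times Euclidean distance; $\|\tau^*\|$ is the minimum cost. Construction: (1) Overlay a uniform grid of cubes of side $\Delta$ and keep the cells intersected by some simplex. (2) Repeatedly subdivide each cell into $2^d$ equal subcubes until, for every point of $P$, the ratio of the distances to the furthest and closest point of the cell is at most $1+\delta$, or until the cell lies wholly within Euclidean distance $\delta/(nm)^{1/d}$ of some point of $P$. Let $Q$ be the resulting cells. (3) In each $q\in Q$ pick an arbitrary point with weight equal to the total volume of simplices contained in $q$; call this set $T$. (4) Compute an optimal transport plan $\nu$ between $P$ and $T$. (5) Obtain $\tau$ by spreading the mass sent by $\nu$ to each $t\in T$ uniformly over the parts of simplices contained in the cell from which $t$ was chosen. *)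

theory Defs
  imports "HOL-Analysis.Analysis"
begin

text \<open>A cell is represented by its lower corner a and its side length s; it is the
half-open axis-parallel cube with corner a and side s.\<close>

definition cube :: "'a::euclidean_space \<times> real \<Rightarrow> 'a set" where
  "cube c = {x. \<forall>i\<in>Basis. fst c \<bullet> i \<le> x \<bullet> i \<and> x \<bullet> i < fst c \<bullet> i + snd c}"

definition children :: "'a::euclidean_space \<times> real \<Rightarrow> ('a \<times> real) set" where
  "children c = {(fst c + (\<Sum>b\<in>B. (snd c / 2) *\<^sub>R b), snd c / 2) | B. B \<subseteq> Basis}"

fun active :: "('a::euclidean_space \<times> real \<Rightarrow> bool) \<Rightarrow> nat \<Rightarrow> 'a \<times> real \<Rightarrow> ('a \<times> real) set" where
  "active stp 0 c = {c}"
| "active stp (Suc k) c = \<Union> {children c' | c'. c' \<in> active stp k c \<and> \<not> stp c'}"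

definition simplex_of :: "(nat \<Rightarrow> nat \<Rightarrow> 'a::euclidean_space) \<Rightarrow> nat \<Rightarrow> 'a set" where
  "simplex_of V j = convex hull (V j ` {..DIM('a)})"

definition simplex_measure :: "nat \<Rightarrow> (nat \<Rightarrow> nat \<Rightarrow> 'a::euclidean_space) \<Rightarrow> 'a measure" where
  "simplex_measure m V = density lborel (\<lambda>y. \<Sum>j<m. indicator (simplex_of V j) y)"

definition stop_rule :: "'a::euclidean_space set \<Rightarrow> nat \<Rightarrow> real \<Rightarrow> 'a \<times> real \<Rightarrow> bool" where
  "stop_rule P m \<delta> c \<longleftrightarrow>
     (\<forall>p\<in>P. (SUP x\<in>cube c. dist p x) \<le> (1 + \<delta>) * infdist p (cube c))
   \<or> (\<exists>p\<in>P. cube c \<subseteq> cball p (\<delta> / (real (card P * m)) powr (1 / real DIM('a))))"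

definition grid_cells :: "'a::euclidean_space \<Rightarrow> real \<Rightarrow> nat \<Rightarrow> (nat \<Rightarrow> nat \<Rightarrow> 'a) \<Rightarrow> ('a \<times> real) set" where
  "grid_cells org \<Delta> m V = {(a, \<Delta>) | a. (\<forall>i\<in>Basis. \<exists>k::int. a \<bullet> i = org \<bullet> i + of_int k * \<Delta>)
       \<and> (\<exists>j<m. cube (a, \<Delta>) \<inter> simplex_of V j \<noteq> {})}"

definition final_cells :: "'a::euclidean_space set \<Rightarrow> nat \<Rightarrow> (nat \<Rightarrow> nat \<Rightarrow> 'a) \<Rightarrow> real \<Rightarrow> 'a \<Rightarrow> real \<Rightarrow> ('a \<times> real) set" where
  "final_cells P m V \<Delta> org \<delta> =
     {c'. \<exists>c\<in>grid_cells org \<Delta> m V. \<exists>k. c' \<in> active (stop_rule P m \<delta>) k c \<and> stop_rule P m \<delta> c'}"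

definition cell_weight :: "nat \<Rightarrow> (nat \<Rightarrow> nat \<Rightarrow> 'a::euclidean_space) \<Rightarrow> 'a \<times> real \<Rightarrow> real" where
  "cell_weight m V q = measure (simplex_measure m V) (cube q)"

definition discrete_plan :: "'a set \<Rightarrow> ('a \<Rightarrow> real) \<Rightarrow> 'c set \<Rightarrow> ('c \<Rightarrow> real) \<Rightarrow> ('a \<Rightarrow> 'c \<Rightarrow> real) \<Rightarrow> bool" where
  "discrete_plan P w Q W \<nu> \<longleftrightarrow>
     (\<forall>p\<in>P. \<forall>q\<in>Q. 0 \<le> \<nu> p q) \<and> (\<forall>p\<in>P. (\<Sum>q\<in>Q. \<nu> p q) = w p) \<and> (\<forall>q\<in>Q. (\<Sum>p\<in>P. \<nu> p q) = W q)"

definition discrete_cost :: "'a::metric_space set \<Rightarrow> 'c set \<Rightarrow> ('c \<Rightarrow> 'a) \<Rightarrow> ('a \<Rightarrow> 'c \<Rightarrow> real) \<Rightarrow> real" where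
  "discrete_cost P Q t \<nu> = (\<Sum>p\<in>P. \<Sum>q\<in>Q. \<nu> p q * dist p (t q))"

text \<open>Transport plans between weighted points P and a target measure \<mu>: each point p
sends its weight w p according to the measure \<pi> p; together they deliver exactly \<mu>.\<close>
definition transport_plan :: "'a::euclidean_space set \<Rightarrow> ('a \<Rightarrow> real) \<Rightarrow> 'a measure \<Rightarrow> ('a \<Rightarrow> 'a measure) \<Rightarrow> bool" where
  "transport_plan P w \<mu> \<pi> \<longleftrightarrow>
     (\<forall>p\<in>P. sets (\<pi> p) = sets borel \<and> emeasure (\<pi> p) (space (\<pi> p)) = ennreal (w p))
   \<and> (\<forall>A\<in>sets borel. (\<Sum>p\<in>P. emeasure (\<pi> p) A) = emeasure \<mu> A)"

definition plan_cost :: "'a::euclidean_space set \<Rightarrow> ('a \<Rightarrow> 'a measure) \<Rightarrow> ennreal" where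
  "plan_cost P \<pi> = (\<Sum>p\<in>P. \<integral>\<^sup>+ y. ennreal (dist p y) \<partial>\<pi> p)"

definition constructed_plan :: "nat \<Rightarrow> (nat \<Rightarrow> nat \<Rightarrow> 'a::euclidean_space) \<Rightarrow> ('a \<times> real) set
     \<Rightarrow> ('a \<Rightarrow> 'a \<times> real \<Rightarrow> real) \<Rightarrow> 'a \<Rightarrow> 'a measure" where
  "constructed_plan m V Q \<nu> p = density (simplex_measure m V)
     (\<lambda>y. \<Sum>q\<in>Q. ennreal (\<nu> p q / cell_weight m V q) * indicator (cube q) y)"

end

theory Submission
  imports Defs
begin

lemma cube_borel[measurable]: "cube c \<in> sets borel"
  unfolding cube_def by measurable

lemma cube_empty: "snd c \<le> 0 \<Longrightarrow> cube c = {}"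
proof -
  assume "snd c \<le> 0"
  have "x \<notin> cube c" for x
  proof
    assume "x \<in> cube c"
    then have "fst c \<bullet> (SOME i. i \<in> Basis) \<le> x \<bullet> (SOME i. i \<in> Basis) \<and> x \<bullet> (SOME i. i \<in> Basis) < fst c \<bullet> (SOME i. i \<in> Basis) + snd c"
      unfolding cube_def using SOME_Basis by blast
    then show False using \<open>snd c \<le> 0\<close> by linarith
  qed
  then show ?thesis by blast
qed

lemma inner_sum_basis:
  fixes a :: "'a::euclidean_space"
  assumes "B \<subseteq> Basis" "i \<in> Basis"
  shows "(a + (\<Sum>b\<in>B. s *\<^sub>R b)) \<bullet> i = a \<bullet> i + (if i \<in> B then s else 0)"
proof -
  have fB: "finite B" using assms(1) finite_Basis finite_subset by blast
  have "(\<Sum>b\<in>B. s *\<^sub>R b) \<bullet> i = (\<Sum>b\<in>B. s * (b \<bullet> i))"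
    by (simp add: inner_sum_left)
  also have "\<dots> = (\<Sum>b\<in>B. if b = i then s else 0)"
    using assms by (intro sum.cong refl) (auto simp: inner_Basis)
  also have "\<dots> = (if i \<in> B then s else 0)" using fB by (simp add: sum.delta')
  finally show ?thesis by (simp add: inner_add_left)
qed

lemma active_grid:
  assumes "c \<in> active stp k g" "snd g = D" "\<forall>i\<in>Basis. \<exists>z::int. fst g \<bullet> i = org \<bullet> i + of_int z * D"
  shows "snd c = D / 2^k \<and> (\<forall>i\<in>Basis. \<exists>z::int. fst c \<bullet> i = org \<bullet> i + of_int z * (D / 2^k))"
  using assms(1)
proof (induction k arbitrary: c)
  case 0
  then show ?case using assms by auto
next
  case (Suc k)
  from Suc.prems obtain c' where c': "c' \<in> active stp k g" and cc: "c \<in> children c'" by auto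
  from cc obtain B where B: "B \<subseteq> Basis"
    and c: "c = (fst c' + (\<Sum>b\<in>B. (snd c' / 2) *\<^sub>R b), snd c' / 2)"
    unfolding children_def by blast
  from Suc.IH[OF c'] have s: "snd c' = D / 2^k" and z: "\<forall>i\<in>Basis. \<exists>z::int. fst c' \<bullet> i = org \<bullet> i + of_int z * (D / 2^k)" by auto
  show ?case
  proof
    show "snd c = D / 2 ^ Suc k" using c s by simp
    show "\<forall>i\<in>Basis. \<exists>z::int. fst c \<bullet> i = org \<bullet> i + of_int z * (D / 2 ^ Suc k)"
    proof
      fix i :: 'a assume i: "i \<in> Basis"
      obtain z :: int where zi: "fst c' \<bullet> i = org \<bullet> i + of_int z * (D / 2^k)" using z i by blast
      have "fst c \<bullet> i = fst c' \<bullet> i + (if i \<in> B then snd c' / 2 else 0)"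
        using c inner_sum_basis[OF B i] by simp
      then show "\<exists>z::int. fst c \<bullet> i = org \<bullet> i + of_int z * (D / 2 ^ Suc k)"
      proof (cases "i \<in> B")
        case True
        then show ?thesis using \<open>fst c \<bullet> i = _\<close> zi s
          by (intro exI[of _ "2*z+1"]) (simp add: field_simps)
      next
        case False
        then show ?thesis using \<open>fst c \<bullet> i = _\<close> zi s
          by (intro exI[of _ "2*z"]) (simp add: field_simps)
      qed
    qed
  qed
qed

lemma child_sub: "c' \<in> children c \<Longrightarrow> cube c' \<subseteq> cube c"
proof
  fix x assume c': "c' \<in> children c" and x: "x \<in> cube c'"
  then obtain B where B: "B \<subseteq> Basis" and c: "c' = (fst c + (\<Sum>b\<in>B. (snd c / 2) *\<^sub>R b), snd c / 2)"
    by (auto simp: children_def)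
  show "x \<in> cube c" unfolding cube_def
  proof (intro CollectI ballI)
    fix i :: 'a assume i: "i \<in> Basis"
    have "fst c' \<bullet> i \<le> x \<bullet> i \<and> x \<bullet> i < fst c' \<bullet> i + snd c'" using x i by (auto simp: cube_def)
    moreover have "fst c' \<bullet> i = fst c \<bullet> i + (if i \<in> B then snd c / 2 else 0)"
      using c inner_sum_basis[OF B i] by simp
    ultimately show "fst c \<bullet> i \<le> x \<bullet> i \<and> x \<bullet> i < fst c \<bullet> i + snd c"
      using c by (auto split: if_splits)
  qed
qed

lemma active_anc:
  assumes "c \<in> active stp k g" "j < k"
  shows "\<exists>a\<in>active stp j g. \<not> stp a \<and> cube c \<subseteq> cube a"
  using assms
proof (induction k arbitrary: c)
  case 0 then show ?case by simp
next
  case (Suc k)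
  then obtain c' where c': "c' \<in> active stp k g" "\<not> stp c'" "c \<in> children c'" by auto
  have sub: "cube c \<subseteq> cube c'" using child_sub[OF c'(3)] .
  show ?case
  proof (cases "j < k")
    case True
    with Suc.IH[OF c'(1)] sub show ?thesis by blast
  next
    case False
    then have "j = k" using Suc.prems by simp
    then show ?thesis using c' sub by blast
  qed
qed

lemma grid_unique:
  fixes a b :: "'a::euclidean_space"
  assumes s: "s > 0"
    and a: "\<forall>i\<in>Basis. \<exists>z::int. a \<bullet> i = org \<bullet> i + of_int z * s"
    and b: "\<forall>i\<in>Basis. \<exists>z::int. b \<bullet> i = org \<bullet> i + of_int z * s"
    and x: "x \<in> cube (a, s)" "x \<in> cube (b, s)"
  shows "a = b"
proof (rule euclidean_eqI)
  fix i :: 'a assume i: "i \<in> Basis"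
  obtain z1 :: int where z1: "a \<bullet> i = org \<bullet> i + of_int z1 * s" using a i by blast
  obtain z2 :: int where z2: "b \<bullet> i = org \<bullet> i + of_int z2 * s" using b i by blast
  have "a \<bullet> i \<le> x \<bullet> i" "x \<bullet> i < a \<bullet> i + s" "b \<bullet> i \<le> x \<bullet> i" "x \<bullet> i < b \<bullet> i + s"
    using x i by (auto simp: cube_def)
  then have "of_int z1 * s < (of_int z2 + 1) * s" "of_int z2 * s < (of_int z1 + 1) * s"
    using z1 z2 by (auto simp: algebra_simps)
  then have "of_int z1 < (of_int z2 + 1::real)" "of_int z2 < (of_int z1 + 1::real)"
    using s by (auto simp: mult_less_cancel_right)
  then have "z1 = z2" by linarith
  then show "a \<bullet> i = b \<bullet> i" using z1 z2 by simp
qed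

lemma final_disjoint:
  assumes c1: "c1 \<in> final_cells P m V \<Delta> org \<delta>" and c2: "c2 \<in> final_cells P m V \<Delta> org \<delta>"
    and ne: "c1 \<noteq> c2"
  shows "cube c1 \<inter> cube c2 = {}"
proof (rule ccontr)
  assume "cube c1 \<inter> cube c2 \<noteq> {}"
  then obtain x where x: "x \<in> cube c1" "x \<in> cube c2" by blast
  let ?stp = "stop_rule P m \<delta>"
  have key: False if A: "d1 \<in> active ?stp k1 g1" "?stp d1" "g1 \<in> grid_cells org \<Delta> m V"
       and B: "d2 \<in> active ?stp k2 g2" "?stp d2" "g2 \<in> grid_cells org \<Delta> m V"
       and k: "k1 \<le> k2" and xx: "x \<in> cube d1" "x \<in> cube d2" and dne: "d1 \<noteq> d2" for d1 d2 k1 k2 g1 g2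
  proof -
    have g1: "snd g1 = \<Delta>" "\<forall>i\<in>Basis. \<exists>z::int. fst g1 \<bullet> i = org \<bullet> i + of_int z * \<Delta>"
      using A(3) by (auto simp: grid_cells_def)
    have g2: "snd g2 = \<Delta>" "\<forall>i\<in>Basis. \<exists>z::int. fst g2 \<bullet> i = org \<bullet> i + of_int z * \<Delta>"
      using B(3) by (auto simp: grid_cells_def)
    note G1 = active_grid[OF A(1) g1]
    show False
    proof (cases "\<Delta> > 0")
      case False
      then have "snd d1 \<le> 0" using G1 by (simp add: divide_nonpos_pos)
      then show False using xx(1) cube_empty[of d1] by blast
    next
      case Dpos: True
      show False
      proof (cases "k1 = k2")
        case True
        note G2 = active_grid[OF B(1) g2]
        have "fst d1 = fst d2"
          using grid_unique[of "\<Delta>/2^k1" "fst d1" org "fst d2" x] G1 G2 True xx Dpos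
          by (metis prod.collapse zero_less_divide_iff zero_less_power zero_less_numeral)
        then have "d1 = d2" using G1 G2 True by (simp add: prod_eq_iff)
        then show False using dne by simp
      next
        case False
        then have "k1 < k2" using k by simp
        from active_anc[OF B(1) this] obtain a where a: "a \<in> active ?stp k1 g2" "\<not> ?stp a" "cube d2 \<subseteq> cube a" by blast
        note Ga = active_grid[OF a(1) g2]
        have "fst d1 = fst a"
          using grid_unique[of "\<Delta>/2^k1" "fst d1" org "fst a" x] G1 Ga xx a(3) Dpos
          by (metis prod.collapse subsetD zero_less_divide_iff zero_less_power zero_less_numeral)
        then have "d1 = a" using G1 Ga by (simp add: prod_eq_iff)
        then show False using a(2) A(2) by simp
      qed
    qed
  qed
  obtain g1 k1 where A: "g1 \<in> grid_cells org \<Delta> m V" "c1 \<in> active ?stp k1 g1" "?stp c1"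
    using c1 by (auto simp: final_cells_def)
  obtain g2 k2 where B: "g2 \<in> grid_cells org \<Delta> m V" "c2 \<in> active ?stp k2 g2" "?stp c2"
    using c2 by (auto simp: final_cells_def)
  show False
  proof (cases "k1 \<le> k2")
    case True then show False using key[OF A(2,3,1) B(2,3,1) True x ne] by blast
  next
    case False then show False using key[OF B(2,3,1) A(2,3,1) _ x(2,1)] ne by simp
  qed
qed

lemma cube_dist_bound:
  fixes x :: "'a::euclidean_space"
  assumes "x \<in> cube c"
  shows "dist (fst c) x \<le> real DIM('a) * \<bar>snd c\<bar>"
proof -
  have "dist (fst c) x = norm (x - fst c)" by (simp add: dist_norm norm_minus_commute)
  also have "\<dots> \<le> (\<Sum>i\<in>Basis. \<bar>(x - fst c) \<bullet> i\<bar>)" by (rule norm_le_l1)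
  also have "\<dots> \<le> (\<Sum>i\<in>(Basis::'a set). \<bar>snd c\<bar>)"
  proof (rule sum_mono)
    fix i :: 'a assume "i \<in> Basis"
    then have "fst c \<bullet> i \<le> x \<bullet> i" "x \<bullet> i < fst c \<bullet> i + snd c" using assms by (auto simp: cube_def)
    then show "\<bar>(x - fst c) \<bullet> i\<bar> \<le> \<bar>snd c\<bar>" by (simp add: inner_diff_left)
  qed
  also have "\<dots> = real DIM('a) * \<bar>snd c\<bar>" by simp
  finally show ?thesis .
qed

lemma cube_pair_ineq:
  fixes P :: "'a::euclidean_space set"
  assumes st: "stop_rule P m \<delta> q" and p: "p \<in> P" and y: "y \<in> cube q" and y': "y' \<in> cube q"
    and dpos: "0 \<le> \<delta>"
  shows "dist p y \<le> (1 + \<delta>) * dist p y' +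
     (if (\<forall>p\<in>P. (SUP x\<in>cube q. dist p x) \<le> (1 + \<delta>) * infdist p (cube q)) then 0
      else 2 * (\<delta> / (real (card P * m)) powr (1 / real DIM('a))))"
proof (cases "\<forall>p\<in>P. (SUP x\<in>cube q. dist p x) \<le> (1 + \<delta>) * infdist p (cube q)")
  case True
  have bdd: "bdd_above (dist p ` cube q)"
  proof (rule bdd_aboveI2)
    fix x assume "x \<in> cube q"
    then have "dist (fst q) x \<le> real DIM('a) * \<bar>snd q\<bar>" by (rule cube_dist_bound)
    then show "dist p x \<le> dist p (fst q) + real DIM('a) * \<bar>snd q\<bar>"
      using dist_triangle[of p x "fst q"] by linarith
  qed
  have "dist p y \<le> (SUP x\<in>cube q. dist p x)" using y bdd by (rule cSUP_upper)
  also have "\<dots> \<le> (1 + \<delta>) * infdist p (cube q)" using True p by blast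
  also have "\<dots> \<le> (1 + \<delta>) * dist p y'" using infdist_le[OF y'] dpos by (intro mult_left_mono) auto
  finally show ?thesis using True by simp
next
  case False
  let ?e = "\<delta> / (real (card P * m)) powr (1 / real DIM('a))"
  from False st obtain p0 where "cube q \<subseteq> cball p0 ?e" unfolding stop_rule_def by blast
  then have "dist p0 y \<le> ?e" "dist p0 y' \<le> ?e" using y y' by auto
  then have "dist y y' \<le> 2 * ?e" using dist_triangle[of y y' p0] by (simp add: dist_commute)
  moreover have "dist p y \<le> dist p y' + dist y y'" using dist_triangle[of p y y'] by (simp add: dist_commute)
  moreover have "dist p y' \<le> (1 + \<delta>) * dist p y'" using dpos by (simp add: algebra_simps)
  moreover have "(if (\<forall>p\<in>P. (SUP x\<in>cube q. dist p x) \<le> (1 + \<delta>) * infdist p (cube q)) then 0 else 2 * ?e) = 2 * ?e"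
    using False by (simp only: if_False)
  ultimately show ?thesis by linarith
qed

lemma stop_not_type1:
  fixes P :: "'a::euclidean_space set"
  assumes "stop_rule P m \<delta> q" "\<not> (\<forall>p\<in>P. (SUP x\<in>cube q. dist p x) \<le> (1 + \<delta>) * infdist p (cube q))"
  shows "\<exists>p\<in>P. cube q \<subseteq> cball p (\<delta> / (real (card P * m)) powr (1 / real DIM('a)))"
  using assms unfolding stop_rule_def by blast

lemma simplex_borel[measurable]: "simplex_of V j \<in> sets borel"
  unfolding simplex_of_def
  by (intro borel_closed compact_imp_closed compact_convex_hull finite_imp_compact) auto

lemma sets_simplex_measure[simp]: "sets (simplex_measure m V) = sets borel"
  by (simp add: simplex_measure_def)

lemma space_simplex_measure[simp]: "space (simplex_measure m V) = UNIV"
  by (simp add: simplex_measure_def)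

lemma mu_le:
  assumes A: "A \<in> sets borel"
  shows "emeasure (simplex_measure m V) A \<le> of_nat m * emeasure lborel A"
proof -
  have "emeasure (simplex_measure m V) A = (\<integral>\<^sup>+x. (\<Sum>j<m. indicator (simplex_of V j) x) * indicator A x \<partial>lborel)"
    unfolding simplex_measure_def using A by (subst emeasure_density) auto
  also have "\<dots> \<le> (\<integral>\<^sup>+x. of_nat m * indicator A x \<partial>lborel)"
  proof (rule nn_integral_mono)
    fix x
    have "(\<Sum>j<m. indicator (simplex_of V j) x :: ennreal) \<le> (\<Sum>j<m. 1)"
      by (intro sum_mono) (auto simp: indicator_def)
    then show "(\<Sum>j<m. indicator (simplex_of V j) x) * indicator A x \<le> (of_nat m :: ennreal) * indicator A x"
      by (intro mult_right_mono) auto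
  qed
  also have "\<dots> = of_nat m * emeasure lborel A" using A by (simp add: nn_integral_cmult_indicator)
  finally show ?thesis .
qed

lemma lborel_cball_le:
  fixes p :: "'a::euclidean_space"
  assumes r: "0 \<le> r"
  shows "emeasure lborel (cball p r) \<le> ennreal ((2*r) ^ DIM('a))"
proof -
  have sub: "cball p r \<subseteq> cbox (p - r *\<^sub>R One) (p + r *\<^sub>R One)"
  proof
    fix x assume "x \<in> cball p r"
    then have n: "norm (x - p) \<le> r" by (simp add: dist_norm norm_minus_commute)
    show "x \<in> cbox (p - r *\<^sub>R One) (p + r *\<^sub>R One)"
      unfolding mem_box
    proof
      fix i :: 'a assume i: "i \<in> Basis"
      have "\<bar>(x - p) \<bullet> i\<bar> \<le> r" using Basis_le_norm[OF i, of "x - p"] n by linarith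
      then show "(p - r *\<^sub>R One) \<bullet> i \<le> x \<bullet> i \<and> x \<bullet> i \<le> (p + r *\<^sub>R One) \<bullet> i"
        using i by (auto simp: inner_diff_left inner_add_left abs_le_iff)
    qed
  qed
  have "emeasure lborel (cball p r) \<le> emeasure lborel (cbox (p - r *\<^sub>R One) (p + r *\<^sub>R One))"
    using sub by (intro emeasure_mono) auto
  also have "\<dots> = ennreal (\<Prod>b\<in>(Basis::'a set). 2 * r)"
    using r by (subst emeasure_lborel_cbox_eq) (auto simp: inner_diff_left inner_add_left)
  also have "\<dots> = ennreal ((2*r) ^ DIM('a))" by simp
  finally show ?thesis .
qed

lemma mu_cball_le:
  fixes p :: "'a::euclidean_space"
  assumes r: "0 \<le> r"
  shows "emeasure (simplex_measure m V) (cball p r) \<le> ennreal (real m * (2*r) ^ DIM('a))"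
proof -
  have "emeasure (simplex_measure m V) (cball p r) \<le> of_nat m * emeasure lborel (cball p r)"
    by (rule mu_le) auto
  also have "\<dots> \<le> of_nat m * ennreal ((2*r) ^ DIM('a))"
    using lborel_cball_le[OF r] by (intro mult_left_mono) auto
  also have "\<dots> = ennreal (real m * (2*r) ^ DIM('a))"
    using r by (simp add: ennreal_mult ennreal_of_nat_eq_real_of_nat)
  finally show ?thesis .
qed

lemma div_mul_le: "0 \<le> x \<Longrightarrow> 0 \<le> b \<Longrightarrow> 0 \<le> (W::real) \<Longrightarrow> x / W * b * W \<le> x * b"
  by (cases "W = 0") auto

lemma sum_indicator_disj_le:
  assumes "finite Q" "disjoint_family_on cube Q"
  shows "(\<Sum>q\<in>Q. indicator (cube q) y :: ennreal) \<le> 1"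
proof (cases "\<exists>q0\<in>Q. y \<in> cube q0")
  case False
  then have "(\<Sum>q\<in>Q. indicator (cube q) y :: ennreal) = 0" by (intro sum.neutral) auto
  then show ?thesis by simp
next
  case True
  then obtain q0 where q0: "q0 \<in> Q" "y \<in> cube q0" by blast
  have "(\<Sum>q\<in>Q. indicator (cube q) y :: ennreal) = indicator (cube q0) y + (\<Sum>q\<in>Q-{q0}. indicator (cube q) y)"
    using assms(1) q0(1) by (rule sum.remove)
  also have "(\<Sum>q\<in>Q-{q0}. indicator (cube q) y :: ennreal) = 0"
  proof (intro sum.neutral ballI)
    fix q assume "q \<in> Q - {q0}"
    then have "cube q \<inter> cube q0 = {}" using assms(2) q0(1) unfolding disjoint_family_on_def by auto
    then show "indicator (cube q) y = (0::ennreal)" using q0(2) by (auto simp: indicator_def)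
  qed
  finally show ?thesis using q0 by simp
qed

lemma sum_measure_cubes:
  assumes "finite Q" "disjoint_family_on cube Q" "sets M = sets borel"
    and fin: "\<And>A. A \<in> sets borel \<Longrightarrow> emeasure M A = ennreal (measure M A)"
  shows "(\<Sum>q\<in>Q. measure M (cube q)) = measure M (\<Union>q\<in>Q. cube q)"
proof -
  have "ennreal (\<Sum>q\<in>Q. measure M (cube q)) = (\<Sum>q\<in>Q. ennreal (measure M (cube q)))"
    by (rule sum_ennreal[symmetric]) simp
  also have "\<dots> = (\<Sum>q\<in>Q. emeasure M (cube q))"
    by (intro sum.cong refl fin[symmetric]) simp
  also have "\<dots> = emeasure M (\<Union>q\<in>Q. cube q)"
    by (rule sum_emeasure) (use assms in auto)
  also have "\<dots> = ennreal (measure M (\<Union>q\<in>Q. cube q))"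
    using assms(1) by (intro fin) auto
  finally show ?thesis by (subst (asm) ennreal_inj) (auto intro: sum_nonneg)
qed

theorem theorem9:
  fixes P :: "'a::euclidean_space set" and w :: "'a \<Rightarrow> real"
    and m :: nat and V :: "nat \<Rightarrow> nat \<Rightarrow> 'a"
    and \<Delta> \<delta> :: real and org :: 'a
    and t :: "'a \<times> real \<Rightarrow> 'a" and \<nu> :: "'a \<Rightarrow> 'a \<times> real \<Rightarrow> real"
    and \<tau>star :: "'a \<Rightarrow> 'a measure"
  assumes finP: "finite P"
    and wpos: "\<forall>p\<in>P. 0 < w p"
    and wsum: "(\<Sum>p\<in>P. w p) = 1"
    and nondeg: "\<forall>j<m. inj_on (V j) {..DIM('a)} \<and> \<not> affine_dependent (V j ` {..DIM('a)})"
    and vol: "(\<Sum>j<m. measure lebesgue (simplex_of V j)) = 1"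
    and Delta: "\<Delta> = Max {dist (V j i) (V j k) | j i k. j < m \<and> i \<le> DIM('a) \<and> k \<le> DIM('a)}"
    and delta: "0 < \<delta>" "\<delta> \<le> 1/5"
    and tQ: "\<forall>q\<in>final_cells P m V \<Delta> org \<delta>. t q \<in> cube q"
    and nu_plan: "discrete_plan P w (final_cells P m V \<Delta> org \<delta>) (cell_weight m V) \<nu>"
    and nu_opt: "\<forall>\<nu>'. discrete_plan P w (final_cells P m V \<Delta> org \<delta>) (cell_weight m V) \<nu>' \<longrightarrow>
        discrete_cost P (final_cells P m V \<Delta> org \<delta>) t \<nu> \<le> discrete_cost P (final_cells P m V \<Delta> org \<delta>) t \<nu>'"
    and star_plan: "transport_plan P w (simplex_measure m V) \<tau>star"
    and star_opt: "\<forall>\<pi>. transport_plan P w (simplex_measure m V) \<pi> \<longrightarrow>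
        plan_cost P \<tau>star \<le> plan_cost P \<pi>"
  shows "plan_cost P (constructed_plan m V (final_cells P m V \<Delta> org \<delta>) \<nu>)
           \<le> ennreal (1 + 21 * \<delta>) * plan_cost P \<tau>star"
proof -
  define Q where "Q = final_cells P m V \<Delta> org \<delta>"
  define \<mu> where "\<mu> = simplex_measure m V"
  define W where "W = cell_weight m V"
  define N where "N = card P * m"
  define \<epsilon> where "\<epsilon> = \<delta> / (real N) powr (1 / real DIM('a))"
  define T1 where "T1 = (\<lambda>q. \<forall>p\<in>P. (SUP x\<in>cube q. dist p x) \<le> (1 + \<delta>) * infdist p (cube q))"
  define e where "e = (\<lambda>q. if T1 q then 0 else 2 * \<epsilon>)"
  define C where "C = plan_cost P \<tau>star"
  define D where "D = discrete_cost P Q t \<nu>"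
  define E where "E = (\<Sum>q\<in>Q. e q * W q)"
  have Pne: "P \<noteq> {}" using wsum by auto
  have mpos: "m > 0" using vol by (cases m) auto
  have Npos: "N > 0" using Pne finP mpos by (simp add: N_def card_gt_0_iff)
  have nu0: "\<forall>p\<in>P. \<forall>q\<in>Q. 0 \<le> \<nu> p q" and nuP: "\<forall>p\<in>P. (\<Sum>q\<in>Q. \<nu> p q) = w p"
    and nuQ: "\<forall>q\<in>Q. (\<Sum>p\<in>P. \<nu> p q) = W q"
    using nu_plan by (auto simp: discrete_plan_def Q_def W_def)
  have finQ: "finite Q"
  proof (rule ccontr)
    assume "infinite Q"
    obtain p where "p \<in> P" using Pne by blast
    then have "(\<Sum>q\<in>Q. \<nu> p q) = w p" using nuP by blast
    then show False using \<open>infinite Q\<close> wpos \<open>p \<in> P\<close> by fastforce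
  qed
  have Qstop: "\<And>q. q \<in> Q \<Longrightarrow> stop_rule P m \<delta> q" by (auto simp: Q_def final_cells_def)
  have disj: "disjoint_family_on cube Q"
    unfolding disjoint_family_on_def Q_def using final_disjoint by blast
  have ineq: "\<And>p q y y'. q \<in> Q \<Longrightarrow> p \<in> P \<Longrightarrow> y \<in> cube q \<Longrightarrow> y' \<in> cube q \<Longrightarrow>
      dist p y \<le> (1 + \<delta>) * dist p y' + e q"
    using cube_pair_ineq[OF Qstop] delta(1) unfolding e_def T1_def \<epsilon>_def N_def by auto
  have e0: "\<And>q. 0 \<le> e q" using delta Npos by (auto simp: e_def \<epsilon>_def)
  have W0: "\<And>q. q \<in> Q \<Longrightarrow> 0 \<le> W q" using nuQ nu0 by (metis sum_nonneg)
  have tsets: "\<And>p. p \<in> P \<Longrightarrow> sets (\<tau>star p) = sets borel"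
    and tspace0: "\<And>p. p \<in> P \<Longrightarrow> emeasure (\<tau>star p) (space (\<tau>star p)) = ennreal (w p)"
    and tsum: "\<And>A. A \<in> sets borel \<Longrightarrow> (\<Sum>p\<in>P. emeasure (\<tau>star p) A) = emeasure \<mu> A"
    using star_plan by (auto simp: transport_plan_def \<mu>_def)
  have tspace: "\<And>p. p \<in> P \<Longrightarrow> space (\<tau>star p) = UNIV"
    using tsets sets_eq_imp_space_eq by fastforce
  have tfin: "\<And>p. p \<in> P \<Longrightarrow> finite_measure (\<tau>star p)"
    using tspace0 by (intro finite_measureI) auto
  have tUNIV: "\<And>p. p \<in> P \<Longrightarrow> measure (\<tau>star p) UNIV = w p"
    using tspace0 tspace wpos by (simp add: measure_def)
  have temeas: "\<And>p A. p \<in> P \<Longrightarrow> emeasure (\<tau>star p) A = ennreal (measure (\<tau>star p) A)"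
    using tfin finite_measure.emeasure_eq_measure by blast
  have musum: "\<And>A. A \<in> sets borel \<Longrightarrow> emeasure \<mu> A = ennreal (\<Sum>p\<in>P. measure (\<tau>star p) A)"
    using tsum temeas by (simp add: sum_ennreal)
  have mumeas: "\<And>A. A \<in> sets borel \<Longrightarrow> measure \<mu> A = (\<Sum>p\<in>P. measure (\<tau>star p) A)"
    using musum by (simp add: measure_def sum_nonneg)
  have muemeas: "\<And>A. A \<in> sets borel \<Longrightarrow> emeasure \<mu> A = ennreal (measure \<mu> A)"
    using musum mumeas by simp
  have Wcube: "\<And>q. W q = measure \<mu> (cube q)" by (simp add: W_def \<mu>_def cell_weight_def)
  have tmeas: "\<And>p f. p \<in> P \<Longrightarrow> f \<in> borel_measurable borel \<Longrightarrow> f \<in> borel_measurable (\<tau>star p)"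
    using measurable_cong_sets[OF tsets refl] by blast
  have mumeasf: "\<And>f::'a \<Rightarrow> ennreal. f \<in> borel_measurable borel \<Longrightarrow> f \<in> borel_measurable \<mu>"
    unfolding \<mu>_def by (subst measurable_cong_sets[OF sets_simplex_measure refl])
  have sets_mu: "sets \<mu> = sets borel" by (simp add: \<mu>_def)
  have Xp: "(\<integral>\<^sup>+ y. ennreal (dist p y) \<partial>constructed_plan m V Q \<nu> p)
      \<le> ennreal (\<Sum>q\<in>Q. \<nu> p q * ((1 + \<delta>) * dist p (t q) + e q))" if p: "p \<in> P" for p
  proof -
    let ?f = "\<lambda>y. \<Sum>q\<in>Q. ennreal (\<nu> p q / cell_weight m V q) * indicator (cube q) y"
    have fm: "?f \<in> borel_measurable \<mu>" by (intro mumeasf) measurable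
    have "(\<integral>\<^sup>+ y. ennreal (dist p y) \<partial>constructed_plan m V Q \<nu> p)
        = (\<integral>\<^sup>+ y. ?f y * ennreal (dist p y) \<partial>\<mu>)"
      unfolding constructed_plan_def \<mu>_def[symmetric]
      by (rule nn_integral_density[OF fm]) (intro mumeasf, measurable)
    also have "\<dots> = (\<integral>\<^sup>+ y. (\<Sum>q\<in>Q. ennreal (\<nu> p q / W q) * (indicator (cube q) y * ennreal (dist p y))) \<partial>\<mu>)"
      by (simp add: sum_distrib_right mult.assoc W_def)
    also have "\<dots> = (\<Sum>q\<in>Q. ennreal (\<nu> p q / W q) * (\<integral>\<^sup>+ y. indicator (cube q) y * ennreal (dist p y) \<partial>\<mu>))"
    proof -
      have "(\<integral>\<^sup>+ y. (\<Sum>q\<in>Q. ennreal (\<nu> p q / W q) * (indicator (cube q) y * ennreal (dist p y))) \<partial>\<mu>)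
         = (\<Sum>q\<in>Q. (\<integral>\<^sup>+ y. ennreal (\<nu> p q / W q) * (indicator (cube q) y * ennreal (dist p y)) \<partial>\<mu>))"
        by (rule nn_integral_sum) (intro mumeasf, measurable)
      also have "\<dots> = (\<Sum>q\<in>Q. ennreal (\<nu> p q / W q) * (\<integral>\<^sup>+ y. indicator (cube q) y * ennreal (dist p y) \<partial>\<mu>))"
        by (intro sum.cong refl nn_integral_cmult mumeasf) measurable
      finally show ?thesis .
    qed
    also have "\<dots> \<le> (\<Sum>q\<in>Q. ennreal (\<nu> p q * ((1 + \<delta>) * dist p (t q) + e q)))"
    proof (rule sum_mono)
      fix q assume q: "q \<in> Q"
      define b where "b = (1 + \<delta>) * dist p (t q) + e q"
      have b0: "0 \<le> b" using e0 delta by (simp add: b_def)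
      have "(\<integral>\<^sup>+ y. indicator (cube q) y * ennreal (dist p y) \<partial>\<mu>) \<le> (\<integral>\<^sup>+ y. ennreal b * indicator (cube q) y \<partial>\<mu>)"
      proof (rule nn_integral_mono)
        fix y
        show "indicator (cube q) y * ennreal (dist p y) \<le> ennreal b * indicator (cube q) y"
        proof (cases "y \<in> cube q")
          case True
          then have "dist p y \<le> b" unfolding b_def using ineq[OF q p True] tQ q by (auto simp: Q_def)
          then show ?thesis using True by (simp add: ennreal_leI)
        qed simp
      qed
      also have "\<dots> = ennreal b * ennreal (W q)"
        using muemeas[of "cube q"] by (subst nn_integral_cmult_indicator) (auto simp: sets_mu Wcube)
      finally have I: "(\<integral>\<^sup>+ y. indicator (cube q) y * ennreal (dist p y) \<partial>\<mu>) \<le> ennreal b * ennreal (W q)" .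
      have "ennreal (\<nu> p q / W q) * (\<integral>\<^sup>+ y. indicator (cube q) y * ennreal (dist p y) \<partial>\<mu>)
          \<le> ennreal (\<nu> p q / W q) * (ennreal b * ennreal (W q))"
        using I by (rule mult_left_mono) simp
      also have "\<dots> = ennreal (\<nu> p q / W q * b * W q)"
      proof -
        have nn: "0 \<le> \<nu> p q / W q" using W0[OF q] nu0 p q by simp
        have 1: "ennreal b * ennreal (W q) = ennreal (b * W q)" using ennreal_mult[OF b0 W0[OF q]] by (rule sym)
        have 2: "ennreal (\<nu> p q / W q) * ennreal (b * W q) = ennreal (\<nu> p q / W q * (b * W q))"
          using ennreal_mult[OF nn mult_nonneg_nonneg[OF b0 W0[OF q]]] by (rule sym)
        show ?thesis unfolding 1 2 by (simp only: mult.assoc)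
      qed
      also have "\<dots> \<le> ennreal (\<nu> p q * b)"
        using div_mul_le[of "\<nu> p q" b "W q"] b0 W0[OF q] nu0 p q by (intro ennreal_leI) auto
      finally show "ennreal (\<nu> p q / W q) * (\<integral>\<^sup>+ y. indicator (cube q) y * ennreal (dist p y) \<partial>\<mu>)
          \<le> ennreal (\<nu> p q * ((1 + \<delta>) * dist p (t q) + e q))" by (simp add: b_def)
    qed
    also have "\<dots> = ennreal (\<Sum>q\<in>Q. \<nu> p q * ((1 + \<delta>) * dist p (t q) + e q))"
      using nu0 p e0 delta by (intro sum_ennreal) (auto intro!: mult_nonneg_nonneg add_nonneg_nonneg)
    finally show ?thesis .
  qed
  have X: "plan_cost P (constructed_plan m V Q \<nu>) \<le> ennreal ((1 + \<delta>) * D + E)"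
  proof -
    have "plan_cost P (constructed_plan m V Q \<nu>) \<le> (\<Sum>p\<in>P. ennreal (\<Sum>q\<in>Q. \<nu> p q * ((1 + \<delta>) * dist p (t q) + e q)))"
      unfolding plan_cost_def using Xp by (rule sum_mono)
    also have "\<dots> = ennreal (\<Sum>p\<in>P. \<Sum>q\<in>Q. \<nu> p q * ((1 + \<delta>) * dist p (t q) + e q))"
      using nu0 e0 delta by (intro sum_ennreal sum_nonneg) (auto intro!: mult_nonneg_nonneg add_nonneg_nonneg)
    also have "(\<Sum>p\<in>P. \<Sum>q\<in>Q. \<nu> p q * ((1 + \<delta>) * dist p (t q) + e q)) = (1 + \<delta>) * D + E"
    proof -
      have "(\<Sum>p\<in>P. \<Sum>q\<in>Q. \<nu> p q * ((1 + \<delta>) * dist p (t q) + e q))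
          = (1 + \<delta>) * (\<Sum>p\<in>P. \<Sum>q\<in>Q. \<nu> p q * dist p (t q)) + (\<Sum>p\<in>P. \<Sum>q\<in>Q. \<nu> p q * e q)"
        by (simp add: algebra_simps sum.distrib sum_distrib_left)
      also have "(\<Sum>p\<in>P. \<Sum>q\<in>Q. \<nu> p q * e q) = (\<Sum>q\<in>Q. e q * W q)"
      proof -
        have "(\<Sum>p\<in>P. \<Sum>q\<in>Q. \<nu> p q * e q) = (\<Sum>q\<in>Q. \<Sum>p\<in>P. \<nu> p q * e q)" by (rule sum.swap)
        also have "\<dots> = (\<Sum>q\<in>Q. (\<Sum>p\<in>P. \<nu> p q) * e q)" by (simp add: sum_distrib_right)
        also have "\<dots> = (\<Sum>q\<in>Q. e q * W q)" using nuQ by (simp add: mult.commute)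
        finally show ?thesis .
      qed
      finally show ?thesis by (simp add: D_def E_def discrete_cost_def)
    qed
    finally show ?thesis .
  qed
  define \<nu>' where "\<nu>' = (\<lambda>p q. measure (\<tau>star p) (cube q))"
  define U where "U = (\<Union>q\<in>Q. cube q)"
  have Ub: "U \<in> sets borel" unfolding U_def using finQ by auto
  have tU: "\<And>p. p \<in> P \<Longrightarrow> (\<Sum>q\<in>Q. \<nu>' p q) = measure (\<tau>star p) U"
    unfolding \<nu>'_def U_def using finQ disj tsets temeas by (intro sum_measure_cubes) auto
  have muU: "(\<Sum>q\<in>Q. W q) = measure \<mu> U"
    unfolding Wcube U_def using finQ disj sets_mu muemeas by (intro sum_measure_cubes) auto
  have "(\<Sum>q\<in>Q. W q) = 1"
  proof -
    have "(\<Sum>q\<in>Q. W q) = (\<Sum>q\<in>Q. \<Sum>p\<in>P. \<nu> p q)" using nuQ by simp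
    also have "\<dots> = (\<Sum>p\<in>P. \<Sum>q\<in>Q. \<nu> p q)" by (rule sum.swap)
    also have "\<dots> = 1" using nuP wsum by simp
    finally show ?thesis .
  qed
  then have sumU: "(\<Sum>p\<in>P. measure (\<tau>star p) U) = 1" using muU mumeas[OF Ub] by simp
  have tUle: "\<And>p. p \<in> P \<Longrightarrow> measure (\<tau>star p) U \<le> w p"
  proof -
    fix p assume p: "p \<in> P"
    have "measure (\<tau>star p) U \<le> measure (\<tau>star p) (space (\<tau>star p))"
      using finite_measure.bounded_measure[OF tfin[OF p]] .
    then show "measure (\<tau>star p) U \<le> w p" using tspace[OF p] tUNIV[OF p] by simp
  qed
  have z: "(\<Sum>p\<in>P. w p - measure (\<tau>star p) U) = 0" using sumU wsum by (simp add: sum_subtractf)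
  have nu'P: "\<And>p. p \<in> P \<Longrightarrow> (\<Sum>q\<in>Q. \<nu>' p q) = w p"
  proof -
    fix p assume p: "p \<in> P"
    have "w p - measure (\<tau>star p) U = 0"
      by (rule sum_nonneg_0[OF finP _ z p]) (simp add: tUle)
    then show "(\<Sum>q\<in>Q. \<nu>' p q) = w p" using tU[OF p] by simp
  qed
  have nu'Q: "\<And>q. q \<in> Q \<Longrightarrow> (\<Sum>p\<in>P. \<nu>' p q) = W q"
    unfolding \<nu>'_def Wcube using mumeas by simp
  have plan': "discrete_plan P w Q W \<nu>'"
    unfolding discrete_plan_def using nu'P nu'Q by (simp add: \<nu>'_def)
  have DD': "D \<le> discrete_cost P Q t \<nu>'"
    using nu_opt plan' unfolding D_def Q_def W_def by blast
  have Yp: "ennreal (\<Sum>q\<in>Q. \<nu>' p q * dist p (t q))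
      \<le> ennreal (1 + \<delta>) * (\<integral>\<^sup>+ y. ennreal (dist p y) \<partial>\<tau>star p) + ennreal (\<Sum>q\<in>Q. e q * \<nu>' p q)"
    if p: "p \<in> P" for p
  proof -
    have cq: "ennreal (\<nu>' p q * dist p (t q))
        \<le> ennreal (1 + \<delta>) * (\<integral>\<^sup>+ y. indicator (cube q) y * ennreal (dist p y) \<partial>\<tau>star p)
          + ennreal (e q * \<nu>' p q)" if q: "q \<in> Q" for q
    proof -
      have "ennreal (\<nu>' p q * dist p (t q)) = (\<integral>\<^sup>+ y. ennreal (dist p (t q)) * indicator (cube q) y \<partial>\<tau>star p)"
        using temeas[OF p, of "cube q"] tsets[OF p]
        by (subst nn_integral_cmult_indicator) (auto simp: \<nu>'_def ennreal_mult mult.commute)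
      also have "\<dots> \<le> (\<integral>\<^sup>+ y. ennreal (1 + \<delta>) * (indicator (cube q) y * ennreal (dist p y))
                              + ennreal (e q) * indicator (cube q) y \<partial>\<tau>star p)"
      proof (rule nn_integral_mono)
        fix y
        show "ennreal (dist p (t q)) * indicator (cube q) y
            \<le> ennreal (1 + \<delta>) * (indicator (cube q) y * ennreal (dist p y)) + ennreal (e q) * indicator (cube q) y"
        proof (cases "y \<in> cube q")
          case True
          have tq: "t q \<in> cube q" using tQ q by (auto simp: Q_def)
          have "dist p (t q) \<le> (1 + \<delta>) * dist p y + e q" using ineq[OF q p tq True] .
          then have "ennreal (dist p (t q)) \<le> ennreal ((1 + \<delta>) * dist p y + e q)" by (rule ennreal_leI)
          also have "\<dots> = ennreal (1 + \<delta>) * ennreal (dist p y) + ennreal (e q)"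
            using delta e0[of q] by (simp add: ennreal_plus ennreal_mult)
          finally show ?thesis using True by simp
        qed simp
      qed
      also have "\<dots> = ennreal (1 + \<delta>) * (\<integral>\<^sup>+ y. indicator (cube q) y * ennreal (dist p y) \<partial>\<tau>star p)
                       + ennreal (e q) * emeasure (\<tau>star p) (cube q)"
        using tsets[OF p]
        by (subst nn_integral_add, (intro tmeas[OF p], measurable)+,
            subst nn_integral_cmult, (intro tmeas[OF p], measurable),
            subst nn_integral_cmult_indicator, auto)
      also have "\<dots> = ennreal (1 + \<delta>) * (\<integral>\<^sup>+ y. indicator (cube q) y * ennreal (dist p y) \<partial>\<tau>star p)
                       + ennreal (e q * \<nu>' p q)"
        using temeas[OF p, of "cube q"] e0[of q] by (simp add: \<nu>'_def ennreal_mult)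
      finally show ?thesis .
    qed
    have "ennreal (\<Sum>q\<in>Q. \<nu>' p q * dist p (t q)) = (\<Sum>q\<in>Q. ennreal (\<nu>' p q * dist p (t q)))"
      by (simp add: \<nu>'_def sum_ennreal)
    also have "\<dots> \<le> (\<Sum>q\<in>Q. ennreal (1 + \<delta>) * (\<integral>\<^sup>+ y. indicator (cube q) y * ennreal (dist p y) \<partial>\<tau>star p)
          + ennreal (e q * \<nu>' p q))"
      using cq by (rule sum_mono)
    also have "\<dots> = ennreal (1 + \<delta>) * (\<Sum>q\<in>Q. \<integral>\<^sup>+ y. indicator (cube q) y * ennreal (dist p y) \<partial>\<tau>star p)
          + ennreal (\<Sum>q\<in>Q. e q * \<nu>' p q)"
      using e0 by (simp add: sum.distrib sum_distrib_left \<nu>'_def sum_ennreal)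
    also have "(\<Sum>q\<in>Q. \<integral>\<^sup>+ y. indicator (cube q) y * ennreal (dist p y) \<partial>\<tau>star p)
        = (\<integral>\<^sup>+ y. (\<Sum>q\<in>Q. indicator (cube q) y) * ennreal (dist p y) \<partial>\<tau>star p)"
      by (subst nn_integral_sum[symmetric]) (intro tmeas[OF p], measurable, simp add: sum_distrib_right)
    also have "\<dots> \<le> (\<integral>\<^sup>+ y. ennreal (dist p y) \<partial>\<tau>star p)"
    proof (rule nn_integral_mono)
      fix y
      have "(\<Sum>q\<in>Q. indicator (cube q) y :: ennreal) \<le> 1" by (rule sum_indicator_disj_le[OF finQ disj])
      then show "(\<Sum>q\<in>Q. indicator (cube q) y) * ennreal (dist p y) \<le> ennreal (dist p y)"
        using mult_right_mono[of "\<Sum>q\<in>Q. indicator (cube q) y" 1 "ennreal (dist p y)"] by simp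
    qed
    finally show ?thesis by (simp add: add_right_mono mult_left_mono)
  qed
  have Y: "ennreal D \<le> ennreal (1 + \<delta>) * C + ennreal E"
  proof -
    have D'0: "0 \<le> discrete_cost P Q t \<nu>'" unfolding discrete_cost_def \<nu>'_def
      by (intro sum_nonneg mult_nonneg_nonneg) auto
    have "ennreal D \<le> ennreal (discrete_cost P Q t \<nu>')" using DD' by (rule ennreal_leI)
    also have "\<dots> = (\<Sum>p\<in>P. ennreal (\<Sum>q\<in>Q. \<nu>' p q * dist p (t q)))"
      unfolding discrete_cost_def by (rule sum_ennreal[symmetric]) (auto simp: \<nu>'_def intro!: sum_nonneg)
    also have "\<dots> \<le> (\<Sum>p\<in>P. ennreal (1 + \<delta>) * (\<integral>\<^sup>+ y. ennreal (dist p y) \<partial>\<tau>star p) + ennreal (\<Sum>q\<in>Q. e q * \<nu>' p q))"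
      using Yp by (rule sum_mono)
    also have "\<dots> = ennreal (1 + \<delta>) * C + ennreal (\<Sum>p\<in>P. \<Sum>q\<in>Q. e q * \<nu>' p q)"
      using e0 by (simp add: sum.distrib sum_distrib_left C_def plan_cost_def \<nu>'_def sum_ennreal sum_nonneg)
    also have "(\<Sum>p\<in>P. \<Sum>q\<in>Q. e q * \<nu>' p q) = E"
    proof -
      have "(\<Sum>p\<in>P. \<Sum>q\<in>Q. e q * \<nu>' p q) = (\<Sum>q\<in>Q. \<Sum>p\<in>P. e q * \<nu>' p q)" by (rule sum.swap)
      also have "\<dots> = (\<Sum>q\<in>Q. e q * (\<Sum>p\<in>P. \<nu>' p q))" by (simp add: sum_distrib_left)
      also have "\<dots> = E" using nu'Q by (simp add: E_def)
      finally show ?thesis .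
    qed
    finally show ?thesis .
  qed
  define \<rho> where "\<rho> = real N powr (1 / real DIM('a))"
  have rho0: "\<rho> > 0" using Npos by (simp add: \<rho>_def)
  have rhod: "\<rho> ^ DIM('a) = real N"
  proof -
    have "\<rho> ^ DIM('a) = \<rho> powr real DIM('a)" using rho0 by (simp add: powr_realpow)
    also have "\<dots> = real N powr (1 / real DIM('a) * real DIM('a))" by (simp add: \<rho>_def powr_powr)
    also have "\<dots> = real N" using Npos by simp
    finally show ?thesis .
  qed
  have eps: "\<epsilon> = \<delta> / \<rho>" by (simp add: \<epsilon>_def \<rho>_def)
  have eps0: "0 \<le> \<epsilon>" using eps rho0 delta by simp
  have Ebound: "E \<le> 2 * \<epsilon> * (real N * (2 * \<epsilon>) ^ DIM('a))"
  proof -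
    define Q2 where "Q2 = {q\<in>Q. \<not> T1 q}"
    have finQ2: "finite Q2" using finQ by (simp add: Q2_def)
    have disj2: "disjoint_family_on cube Q2" using disj by (rule disjoint_family_on_mono[rotated]) (auto simp: Q2_def)
    have "E = (\<Sum>q\<in>Q. if \<not> T1 q then 2 * \<epsilon> * W q else 0)"
      unfolding E_def e_def by (intro sum.cong) auto
    also have "\<dots> = (\<Sum>q\<in>Q2. 2 * \<epsilon> * W q)"
      unfolding Q2_def using finQ by (simp add: sum.inter_filter)
    also have "\<dots> = 2 * \<epsilon> * (\<Sum>q\<in>Q2. W q)" by (simp add: sum_distrib_left)
    finally have Eeq: "E = 2 * \<epsilon> * (\<Sum>q\<in>Q2. W q)" .
    have "ennreal (\<Sum>q\<in>Q2. W q) = ennreal (measure \<mu> (\<Union>q\<in>Q2. cube q))"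
      unfolding Wcube using finQ2 disj2 sets_mu muemeas by (subst sum_measure_cubes) auto
    also have "\<dots> = emeasure \<mu> (\<Union>q\<in>Q2. cube q)" using finQ2 by (intro muemeas[symmetric]) auto
    also have "\<dots> \<le> emeasure \<mu> (\<Union>p\<in>P. cball p \<epsilon>)"
    proof (rule emeasure_mono)
      show "(\<Union>q\<in>Q2. cube q) \<subseteq> (\<Union>p\<in>P. cball p \<epsilon>)"
      proof
        fix x assume "x \<in> (\<Union>q\<in>Q2. cube q)"
        then obtain q where q: "q \<in> Q" "\<not> T1 q" "x \<in> cube q" by (auto simp: Q2_def)
        then obtain p where "p \<in> P" "cube q \<subseteq> cball p \<epsilon>"
          using stop_not_type1[OF Qstop[OF q(1)]] unfolding T1_def \<epsilon>_def N_def by blast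
        then show "x \<in> (\<Union>p\<in>P. cball p \<epsilon>)" using q(3) by blast
      qed
      show "(\<Union>p\<in>P. cball p \<epsilon>) \<in> sets \<mu>" using finP by (auto simp: sets_mu)
    qed
    also have "\<dots> \<le> (\<Sum>p\<in>P. emeasure \<mu> (cball p \<epsilon>))"
      using finP by (intro emeasure_subadditive_finite) (auto simp: sets_mu)
    also have "\<dots> \<le> (\<Sum>p\<in>P. ennreal (real m * (2 * \<epsilon>) ^ DIM('a)))"
      unfolding \<mu>_def using eps0 by (intro sum_mono mu_cball_le)
    also have "\<dots> = ennreal (real N * (2 * \<epsilon>) ^ DIM('a))"
      using eps0 by (subst sum_ennreal) (auto simp: N_def mult.assoc)
    finally have "(\<Sum>q\<in>Q2. W q) \<le> real N * (2 * \<epsilon>) ^ DIM('a)"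
      using eps0 by (subst (asm) ennreal_le_iff) auto
    then show ?thesis unfolding Eeq using eps0 by (intro mult_left_mono) auto
  qed
  have Cbound: "ennreal (r * (1 - real N * (2 * r) ^ DIM('a))) \<le> C" if r: "r > 0" for r
  proof -
    have mball: "measure \<mu> (ball p r) \<le> real m * (2 * r) ^ DIM('a)" for p
    proof -
      have "ennreal (measure \<mu> (ball p r)) = emeasure \<mu> (ball p r)" by (intro muemeas[symmetric]) auto
      also have "\<dots> \<le> emeasure \<mu> (cball p r)" by (intro emeasure_mono) (auto simp: sets_mu)
      also have "\<dots> \<le> ennreal (real m * (2 * r) ^ DIM('a))" unfolding \<mu>_def using r by (intro mu_cball_le) auto
      finally show ?thesis using r by (subst (asm) ennreal_le_iff) auto
    qed
    have tball: "measure (\<tau>star p) (ball p r) \<le> real m * (2 * r) ^ DIM('a)" if p: "p \<in> P" for p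
    proof -
      have "measure (\<tau>star p) (ball p r) \<le> (\<Sum>p'\<in>P. measure (\<tau>star p') (ball p r))"
        using finP p by (intro member_le_sum) auto
      also have "\<dots> = measure \<mu> (ball p r)" using mumeas by simp
      finally show ?thesis using mball[of p] by linarith
    qed
    have perp: "ennreal (r * (w p - measure (\<tau>star p) (ball p r))) \<le> (\<integral>\<^sup>+ y. ennreal (dist p y) \<partial>\<tau>star p)"
      if p: "p \<in> P" for p
    proof -
      have "measure (\<tau>star p) (UNIV - ball p r) = w p - measure (\<tau>star p) (ball p r)"
        using finite_measure.finite_measure_compl[OF tfin[OF p], of "ball p r"] tspace[OF p] tsets[OF p] tUNIV[OF p]
        by simp
      then have "ennreal (r * (w p - measure (\<tau>star p) (ball p r))) = ennreal r * emeasure (\<tau>star p) (UNIV - ball p r)"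
        using temeas[OF p] r by (simp add: ennreal_mult')
      also have "\<dots> = (\<integral>\<^sup>+ y. ennreal r * indicator (UNIV - ball p r) y \<partial>\<tau>star p)"
        using tsets[OF p] by (subst nn_integral_cmult_indicator) auto
      also have "\<dots> \<le> (\<integral>\<^sup>+ y. ennreal (dist p y) \<partial>\<tau>star p)"
      proof (rule nn_integral_mono)
        fix y
        show "ennreal r * indicator (UNIV - ball p r) y \<le> ennreal (dist p y)"
        proof (cases "y \<in> ball p r")
          case False
          then have "r \<le> dist p y" by (simp add: mem_ball)
          then show ?thesis using False by (simp add: ennreal_leI)
        qed simp
      qed
      finally show ?thesis .
    qed
    have "(\<Sum>p\<in>P. measure (\<tau>star p) (ball p r)) \<le> (\<Sum>p\<in>P. real m * (2 * r) ^ DIM('a))"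
      using tball by (rule sum_mono)
    then have sb: "(\<Sum>p\<in>P. measure (\<tau>star p) (ball p r)) \<le> real N * (2 * r) ^ DIM('a)"
      by (simp add: N_def)
    have "r * (1 - real N * (2 * r) ^ DIM('a)) \<le> r * (1 - (\<Sum>p\<in>P. measure (\<tau>star p) (ball p r)))"
      using sb r by (intro mult_left_mono) auto
    also have "\<dots> = (\<Sum>p\<in>P. r * (w p - measure (\<tau>star p) (ball p r)))"
      using wsum by (simp add: sum_distrib_left[symmetric] sum_subtractf right_diff_distrib)
    finally have "ennreal (r * (1 - real N * (2 * r) ^ DIM('a))) \<le> ennreal (\<Sum>p\<in>P. r * (w p - measure (\<tau>star p) (ball p r)))"
      by (rule ennreal_leI)
    also have "\<dots> = (\<Sum>p\<in>P. ennreal (r * (w p - measure (\<tau>star p) (ball p r))))"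
    proof (rule sum_ennreal[symmetric])
      fix p assume p: "p \<in> P"
      have "measure (\<tau>star p) (ball p r) \<le> w p"
        using finite_measure.bounded_measure[OF tfin[OF p], of "ball p r"] tspace[OF p] tUNIV[OF p] by simp
      then show "0 \<le> r * (w p - measure (\<tau>star p) (ball p r))" using r by simp
    qed
    also have "\<dots> \<le> C" unfolding C_def plan_cost_def using perp by (rule sum_mono)
    finally show ?thesis .
  qed
  have Cb: "ennreal (1 / (8 * \<rho>)) \<le> C"
  proof -
    define r where "r = 1 / (4 * \<rho>)"
    have r0: "r > 0" using rho0 by (simp add: r_def)
    have "real N * (2 * r) ^ DIM('a) = (\<rho> * (2 * r)) ^ DIM('a)" by (simp add: rhod[symmetric] power_mult_distrib)
    also have "\<rho> * (2 * r) = 1 / 2" using rho0 by (simp add: r_def)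
    also have "(1 / 2 :: real) ^ DIM('a) \<le> (1/2) ^ 1" by (rule power_decreasing) (auto simp: DIM_positive Suc_leI)
    finally have h: "real N * (2 * r) ^ DIM('a) \<le> 1 / 2" by simp
    have "1 / (8 * \<rho>) \<le> r * (1 - real N * (2 * r) ^ DIM('a))"
    proof -
      have "1 / (8 * \<rho>) = r * (1 / 2)" using rho0 by (simp add: r_def)
      also have "\<dots> \<le> r * (1 - real N * (2 * r) ^ DIM('a))" using h r0 by (intro mult_left_mono) auto
      finally show ?thesis .
    qed
    then have "ennreal (1 / (8 * \<rho>)) \<le> ennreal (r * (1 - real N * (2 * r) ^ DIM('a)))" by (rule ennreal_leI)
    also have "\<dots> \<le> C" using Cbound[OF r0] .
    finally show ?thesis .
  qed
  have Eb: "E \<le> 4 * \<delta>^2 / \<rho>"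
  proof -
    have "real N * (2 * \<epsilon>) ^ DIM('a) = (\<rho> * (2 * \<epsilon>)) ^ DIM('a)" by (simp add: rhod[symmetric] power_mult_distrib)
    also have "\<rho> * (2 * \<epsilon>) = 2 * \<delta>" using rho0 by (simp add: eps)
    also have "(2 * \<delta>) ^ DIM('a) \<le> (2 * \<delta>) ^ 1" using delta by (intro power_decreasing) (auto simp: DIM_positive Suc_leI)
    finally have "real N * (2 * \<epsilon>) ^ DIM('a) \<le> 2 * \<delta>" by simp
    then have "E \<le> 2 * \<epsilon> * (2 * \<delta>)" using Ebound eps0 by (smt (verit) mult_left_mono)
    then show ?thesis using rho0 by (simp add: eps power2_eq_square)
  qed
  have E0: "0 \<le> E" unfolding E_def using e0 W0 by (intro sum_nonneg mult_nonneg_nonneg) auto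
  show ?thesis
  proof (cases "C = top")
    case True
    have "ennreal (1 + 21 * \<delta>) \<noteq> 0" using delta by simp
    then show ?thesis using True by (simp add: C_def ennreal_mult_top)
  next
    case False
    then obtain c where c: "C = ennreal c" "0 \<le> c" by (cases C) auto
    have c8: "1 / (8 * \<rho>) \<le> c" using Cb c by simp
    have "ennreal D \<le> ennreal ((1 + \<delta>) * c + E)"
      using Y c delta E0 by (simp add: ennreal_mult ennreal_plus)
    moreover have "0 \<le> (1 + \<delta>) * c + E" using c delta E0 by simp
    ultimately have Dle: "D \<le> (1 + \<delta>) * c + E" using ennreal_le_iff by blast
    have E32: "E \<le> 32 * \<delta>^2 * c"
    proof -
      have "1 / \<rho> \<le> 8 * c" using c8 rho0 by (simp add: field_simps)
      then have "4 * \<delta>^2 * (1 / \<rho>) \<le> 4 * \<delta>^2 * (8 * c)" by (intro mult_left_mono) auto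
      then show ?thesis using Eb by simp
    qed
    have h1: "(1 + \<delta>) * D \<le> (1 + \<delta>) * ((1 + \<delta>) * c + E)" using Dle delta by (intro mult_left_mono) auto
    have h2: "(2 + \<delta>) * E \<le> (2 + \<delta>) * (32 * \<delta>^2 * c)" using E32 delta by (intro mult_left_mono) auto
    have poly: "(1 + \<delta>)^2 + (2 + \<delta>) * (32 * \<delta>^2) \<le> 1 + 21 * \<delta>"
    proof -
      have "65 * \<delta> + 32 * \<delta>^2 \<le> 19"
      proof -
        have "\<delta> * \<delta> \<le> (1/5) * (1/5)" using delta by (intro mult_mono) auto
        then show ?thesis using delta unfolding power2_eq_square by linarith
      qed
      then have "\<delta> * (65 * \<delta> + 32 * \<delta>^2) \<le> \<delta> * 19" using delta by (intro mult_left_mono) auto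
      then show ?thesis by (simp add: power2_eq_square algebra_simps power3_eq_cube)
    qed
    have h3: "c * ((1 + \<delta>)^2 + (2 + \<delta>) * (32 * \<delta>^2)) \<le> c * (1 + 21 * \<delta>)"
      using poly c by (intro mult_left_mono) auto
    have fin: "(1 + \<delta>) * D + E \<le> (1 + 21 * \<delta>) * c"
      using h1 h2 h3 by (simp add: power2_eq_square algebra_simps)
    have "plan_cost P (constructed_plan m V Q \<nu>) \<le> ennreal ((1 + 21 * \<delta>) * c)"
      using X fin by (meson ennreal_leI order_trans)
    also have "\<dots> = ennreal (1 + 21 * \<delta>) * C" using c delta by (simp add: ennreal_mult)
    finally show ?thesis by (simp add: Q_def C_def)
  qed
qed

end
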